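(* Let $\mathbf A$ be a residuated semigroup and $p$ a positive idempotent of $\mathbf A$. The following are equivalent: (1) $pa=ap$ for every $a\in A$; (2) for every $a\in A$, $pa=a$ if and only if $ap=a$; (3) for every $a\in A$, $p\backslash a=a$ if and only if $a/p=a$; (4) for every $a\in A$, $p\backslash a=a/p$; (5) $\{p\backslash a: a\in A\}=\{a/p: a\in A\}$.
   Context: A residuated semigroup is a structure $\langle A,\le,\cdot,\backslash,/\rangle$ where $\langle A,\le\rangle$ is a poset, $\langle A,\cdot\rangle$ is a semigroup (we write $xy$ for $x\cdot y$), and for all $x,y,z$: $xy\le z\iff x\le z/y\iff y\le x\backslash z$. An element $p$ is positive if $a\le pa$ and $a\le ap$ for all $a\in A$; it is idempotent if $pp=p$. *)

theory Defs
  imports Main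
begin

text \<open>A residuated semigroup on the type 'a: a partial order le, an associative
multiplication mult, and left/right residuals ldiv (x \ z) and rdiv (z / y),
satisfying  mult x y \<le> z  iff  x \<le> rdiv z y  iff  y \<le> ldiv x z.\<close>

definition residuated_semigroup ::
  "('a \<Rightarrow> 'a \<Rightarrow> bool) \<Rightarrow> ('a \<Rightarrow> 'a \<Rightarrow> 'a) \<Rightarrow> ('a \<Rightarrow> 'a \<Rightarrow> 'a) \<Rightarrow> ('a \<Rightarrow> 'a \<Rightarrow> 'a) \<Rightarrow> bool"
  where "residuated_semigroup le mult ldiv rdiv \<longleftrightarrow>
    partial_order_on UNIV {(x, y). le x y} \<and>
    (\<forall>x y z. mult (mult x y) z = mult x (mult y z)) \<and>
    (\<forall>x y z. (le (mult x y) z \<longleftrightarrow> le x (rdiv z y)) \<and>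
             (le (mult x y) z \<longleftrightarrow> le y (ldiv x z)))"

definition positive_elem :: "('a \<Rightarrow> 'a \<Rightarrow> bool) \<Rightarrow> ('a \<Rightarrow> 'a \<Rightarrow> 'a) \<Rightarrow> 'a \<Rightarrow> bool"
  where "positive_elem le mult p \<longleftrightarrow> (\<forall>a. le a (mult p a) \<and> le a (mult a p))"

definition idempotent_elem :: "('a \<Rightarrow> 'a \<Rightarrow> 'a) \<Rightarrow> 'a \<Rightarrow> bool"
  where "idempotent_elem mult p \<longleftrightarrow> mult p p = p"

end

theory Submission
  imports Defs
begin

theorem proposition2p5:
  fixes le :: "'a \<Rightarrow> 'a \<Rightarrow> bool" and mult ldiv rdiv :: "'a \<Rightarrow> 'a \<Rightarrow> 'a" and p :: 'a
  assumes "residuated_semigroup le mult ldiv rdiv"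
    and "positive_elem le mult p"
    and "idempotent_elem mult p"
  defines "C1 \<equiv> (\<forall>a. mult p a = mult a p)"
    and "C2 \<equiv> (\<forall>a. mult p a = a \<longleftrightarrow> mult a p = a)"
    and "C3 \<equiv> (\<forall>a. ldiv p a = a \<longleftrightarrow> rdiv a p = a)"
    and "C4 \<equiv> (\<forall>a. ldiv p a = rdiv a p)"
    and "C5 \<equiv> (range (\<lambda>a. ldiv p a) = range (\<lambda>a. rdiv a p))"
  shows "(C1 \<longleftrightarrow> C2) \<and> (C2 \<longleftrightarrow> C3) \<and> (C3 \<longleftrightarrow> C4) \<and> (C4 \<longleftrightarrow> C5)"
proof -
  have po: "partial_order_on UNIV {(x, y). le x y}"
    and assoc: "\<And>x y z. mult (mult x y) z = mult x (mult y z)"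
    and resr: "\<And>x y z. le (mult x y) z \<longleftrightarrow> le x (rdiv z y)"
    and resl: "\<And>x y z. le (mult x y) z \<longleftrightarrow> le y (ldiv x z)"
    using assms(1) unfolding residuated_semigroup_def by blast+
  have refl: "\<And>x. le x x" using po unfolding partial_order_on_def preorder_on_def refl_on_def by auto
  have trans: "\<And>x y z. le x y \<Longrightarrow> le y z \<Longrightarrow> le x z"
    using po unfolding partial_order_on_def preorder_on_def trans_def by blast
  have anti: "\<And>x y. le x y \<Longrightarrow> le y x \<Longrightarrow> x = y"
    using po unfolding partial_order_on_def antisym_def by blast
  have posl: "\<And>a. le a (mult p a)" and posr: "\<And>a. le a (mult a p)"
    using assms(2) unfolding positive_elem_def by auto
  have pp: "mult p p = p" using assms(3) unfolding idempotent_elem_def by auto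
  have pl_idem: "\<And>a. mult p (mult p a) = mult p a" by (metis assoc pp)
  have pr_idem: "\<And>a. mult (mult a p) p = mult a p" by (metis assoc pp)
  have lfix: "\<And>a. ldiv p a = a \<longleftrightarrow> mult p a = a"
  proof
    fix a assume h: "ldiv p a = a"
    have "le (mult p a) a" using resl[of p a a] h refl by simp
    thus "mult p a = a" using anti posl by blast
  next
    fix a assume h: "mult p a = a"
    have "le a (ldiv p a)" using resl[of p a a] h refl by simp
    moreover have "le (mult p (ldiv p a)) a" using resl refl by blast
    hence "le (ldiv p a) a" using trans posl by blast
    ultimately show "ldiv p a = a" using anti by blast
  qed
  have rfix: "\<And>a. rdiv a p = a \<longleftrightarrow> mult a p = a"
  proof
    fix a assume h: "rdiv a p = a"
    have "le (mult a p) a" using resr[of a p a] h refl by simp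
    thus "mult a p = a" using anti posr by blast
  next
    fix a assume h: "mult a p = a"
    have "le a (rdiv a p)" using resr[of a p a] h refl by simp
    moreover have "le (mult (rdiv a p) p) a" using resr refl by blast
    hence "le (rdiv a p) a" using trans posr by blast
    ultimately show "rdiv a p = a" using anti by blast
  qed
  have lle: "\<And>a. le (ldiv p a) a"
    by (meson posl refl resl trans)
  have rle: "\<And>a. le (rdiv a p) a"
    by (meson posr refl resr trans)
  have lidem: "\<And>a. ldiv p (ldiv p a) = ldiv p a"
  proof -
    fix a
    have "le (mult p (mult p (ldiv p a))) a"
      using assoc pp resl refl by metis
    hence "le (mult p (ldiv p a)) a" using pl_idem by simp
    hence "le (mult p (ldiv p a)) (ldiv p a)"
      using resl by (metis assoc pp)
    thus "ldiv p (ldiv p a) = ldiv p a" using lfix anti posl by blast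
  qed
  have ridem: "\<And>a. rdiv (rdiv a p) p = rdiv a p"
  proof -
    fix a
    have "le (mult (mult (rdiv a p) p) p) a"
      using assoc pp resr refl by metis
    hence "le (mult (rdiv a p) p) (rdiv a p)"
      using resr by blast
    thus "rdiv (rdiv a p) p = rdiv a p" using rfix anti posr by blast
  qed
  have lmono: "\<And>x y. le x y \<Longrightarrow> le (ldiv p x) (ldiv p y)"
    by (meson refl resl trans)
  have rmono: "\<And>x y. le x y \<Longrightarrow> le (rdiv x p) (rdiv y p)"
    by (meson refl resr trans)
  have e12: "C1 \<longleftrightarrow> C2"
  proof
    assume C1 thus C2 unfolding C1_def C2_def by metis
  next
    assume c2: C2
    show C1 unfolding C1_def
    proof
      fix a
      have "mult (mult p a) p = mult p a" using c2 pl_idem unfolding C2_def by metis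
      moreover have "mult p (mult a p) = mult a p" using c2 pr_idem unfolding C2_def by metis
      ultimately show "mult p a = mult a p" using assoc by metis
    qed
  qed
  have e23: "C2 \<longleftrightarrow> C3" unfolding C2_def C3_def using lfix rfix by simp
  have e34: "C3 \<longleftrightarrow> C4"
  proof
    assume c3: C3
    show C4 unfolding C4_def
    proof
      fix a
      have "rdiv (ldiv p a) p = ldiv p a" using c3 lidem unfolding C3_def by metis
      hence 1: "le (ldiv p a) (rdiv a p)" using rmono[OF lle[of a]] by simp
      have "ldiv p (rdiv a p) = rdiv a p" using c3 ridem unfolding C3_def by metis
      hence 2: "le (rdiv a p) (ldiv p a)" using lmono[OF rle[of a]] by simp
      show "ldiv p a = rdiv a p" using anti 1 2 by blast
    qed
  next
    assume C4 thus C3 unfolding C4_def C3_def by simp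
  qed
  have rangeL: "range (\<lambda>a. ldiv p a) = {a. ldiv p a = a}"
  proof (rule set_eqI, rule iffI)
    fix x assume "x \<in> range (\<lambda>a. ldiv p a)" thus "x \<in> {a. ldiv p a = a}" using lidem by auto
  next
    fix x assume "x \<in> {a. ldiv p a = a}" hence "x = ldiv p x" by simp
    thus "x \<in> range (\<lambda>a. ldiv p a)" by (rule range_eqI)
  qed
  have rangeR: "range (\<lambda>a. rdiv a p) = {a. rdiv a p = a}"
  proof (rule set_eqI, rule iffI)
    fix x assume "x \<in> range (\<lambda>a. rdiv a p)" thus "x \<in> {a. rdiv a p = a}" using ridem by auto
  next
    fix x assume "x \<in> {a. rdiv a p = a}" hence "x = rdiv x p" by simp
    thus "x \<in> range (\<lambda>a. rdiv a p)" by (rule range_eqI)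
  qed
  have e35: "C3 \<longleftrightarrow> C5" unfolding C3_def C5_def rangeL rangeR by auto
  show ?thesis using e12 e23 e34 e35 by blast
qed

end
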